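(* Let $1\le k<n$. Every RYD in $\mathbb{Y}_{OG(k,2n)}$ is a $W^{OG(k,2n)}$-diagram, i.e. $\mathbb{Y}_{OG(k,2n)}\subseteq\Theta(k,2n)$.
   Context: Root system $D_n$: positive roots $e_a\pm e_b$ ($a<b$); simple roots $e_i-e_{i+1}$ ($i<n$), $e_{n-1}+e_n$; order $\alpha\le\beta$ iff $\beta-\alpha$ is a nonnegative integer combination of simple roots. $W^{OG(k,2n)}$ is the set of signed permutations $w=(y_1,\dots,y_{k-r},\overline{z_r},\dots,\overline{z_1},v_1,\dots,v_{n-k-1},\widehat{v_{n-k}})$ of $1,\dots,n$ with an even number of barred (negative) entries, $0\le r\le k$, $y_1<\dots<y_{k-r}$, $z_r>\dots>z_1$, $v_1<\dots<v_{n-k}$, $\widehat{v_{n-k}}\in\{v_{n-k},\overline{v_{n-k}}\}$ according to the parity of $r$. $w$ acts by $e_a\mapsto\pm e_{|w(a)|}$ (minus if barred); $\mathrm{Inv}(w)$ is the set of positive roots sent to negative roots, and $\mathbb{Y}_{OG(k,2n)}=\{\mathrm{Inv}(w)\}$. Base region: roots $e_a\pm e_b$ with $a\le k<b$; its $i$-th double-tailed diamond ($1\le i\le k$) consists of the $2n-2k$ roots $e_{k+1-i}\pm e_b$, $b>k$. Top region: roots $e_a+e_b$ with $a<b\le k$. A subset $S$ of the union of the two regions is a $W^{OG(k,2n)}$-diagram if it meets each region in a lower order ideal of that region and, for each top root $e_a+e_b$, $e_a+e_b\in S$ whenever $S$ contains more than $2n-2k$ roots of the double-tailed diamonds indexed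 by $a$ and $b$ (i.e. diamonds $k+1-a$ and $k+1-b$) combined, and $e_a+e_b\notin S$ whenever it contains fewer than $2n-2k$ of them. $\Theta(k,2n)$ is the set of such diagrams. *)

theory Defs
  imports Main
begin

text \<open>Vectors in Z^n are modelled as functions nat => int (coordinates 1..n).\<close>

definition ee :: "nat \<Rightarrow> nat \<Rightarrow> int" where
  "ee a = (\<lambda>i. if i = a then 1 else 0)"

definition rplus :: "nat \<Rightarrow> nat \<Rightarrow> nat \<Rightarrow> int" where
  "rplus a b = (\<lambda>i. ee a i + ee b i)"

definition rminus :: "nat \<Rightarrow> nat \<Rightarrow> nat \<Rightarrow> int" where
  "rminus a b = (\<lambda>i. ee a i - ee b i)"

definition pos_roots :: "nat \<Rightarrow> (nat \<Rightarrow> int) set" where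
  "pos_roots n = {rplus a b | a b. 1 \<le> a \<and> a < b \<and> b \<le> n}
               \<union> {rminus a b | a b. 1 \<le> a \<and> a < b \<and> b \<le> n}"

definition root_le :: "nat \<Rightarrow> (nat \<Rightarrow> int) \<Rightarrow> (nat \<Rightarrow> int) \<Rightarrow> bool" where
  "root_le n \<alpha> \<beta> \<longleftrightarrow> (\<exists>c :: nat \<Rightarrow> nat. \<forall>j.
      \<beta> j - \<alpha> j = (\<Sum>i\<in>{1..<n}. int (c i) * rminus i (Suc i) j)
                     + int (c n) * rplus (n - 1) n j)"

text \<open>Signed permutations of 1..n: w a is the (possibly negated) image of a.\<close>
definition signed_perm :: "nat \<Rightarrow> (nat \<Rightarrow> int) \<Rightarrow> bool" where
  "signed_perm n w \<longleftrightarrow> bij_betw (\<lambda>a. nat \<bar>w a\<bar>) {1..n} {1..n}"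

definition act :: "nat \<Rightarrow> (nat \<Rightarrow> int) \<Rightarrow> (nat \<Rightarrow> int) \<Rightarrow> (nat \<Rightarrow> int)" where
  "act n w v = (\<lambda>j. \<Sum>a\<in>{1..n}. if nat \<bar>w a\<bar> = j then sgn (w a) * v a else 0)"

definition Inv :: "nat \<Rightarrow> (nat \<Rightarrow> int) \<Rightarrow> (nat \<Rightarrow> int) set" where
  "Inv n w = {\<alpha> \<in> pos_roots n. (\<lambda>j. - act n w \<alpha> j) \<in> pos_roots n}"

text \<open>The set W^{OG(k,2n)}: w = (y_1..y_{k-r}, bar z_r .. bar z_1, v_1 .. v_{n-k-1}, hat v_{n-k}).\<close>
definition W_OG :: "nat \<Rightarrow> nat \<Rightarrow> (nat \<Rightarrow> int) set" where
  "W_OG k n = {w. signed_perm n w \<and> even (card {a \<in> {1..n}. w a < 0}) \<and>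
     (\<exists>r \<le> k.
        (\<forall>a \<in> {1..k - r}. w a > 0) \<and>
        (\<forall>a b. 1 \<le> a \<longrightarrow> a < b \<longrightarrow> b \<le> k - r \<longrightarrow> w a < w b) \<and>
        (\<forall>a \<in> {k - r + 1..k}. w a < 0) \<and>
        (\<forall>a b. k - r < a \<longrightarrow> a < b \<longrightarrow> b \<le> k \<longrightarrow> \<bar>w a\<bar> > \<bar>w b\<bar>) \<and>
        (\<forall>a \<in> {k + 1..<n}. w a > 0) \<and>
        (\<forall>a b. k < a \<longrightarrow> a < b \<longrightarrow> b \<le> n \<longrightarrow> \<bar>w a\<bar> < \<bar>w b\<bar>) \<and>
        (w n < 0 \<longleftrightarrow> odd r))}"

definition Y_OG :: "nat \<Rightarrow> nat \<Rightarrow> (nat \<Rightarrow> int) set set" where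
  "Y_OG k n = Inv n ` W_OG k n"

definition base_region :: "nat \<Rightarrow> nat \<Rightarrow> (nat \<Rightarrow> int) set" where
  "base_region k n = {rplus a b | a b. 1 \<le> a \<and> a \<le> k \<and> k < b \<and> b \<le> n}
                   \<union> {rminus a b | a b. 1 \<le> a \<and> a \<le> k \<and> k < b \<and> b \<le> n}"

definition top_region :: "nat \<Rightarrow> (nat \<Rightarrow> int) set" where
  "top_region k = {rplus a b | a b. 1 \<le> a \<and> a < b \<and> b \<le> k}"

definition diamond :: "nat \<Rightarrow> nat \<Rightarrow> nat \<Rightarrow> (nat \<Rightarrow> int) set" where
  "diamond k n i = {rplus (k + 1 - i) b | b. k < b \<and> b \<le> n}
                 \<union> {rminus (k + 1 - i) b | b. k < b \<and> b \<le> n}"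

definition lower_ideal :: "nat \<Rightarrow> (nat \<Rightarrow> int) set \<Rightarrow> (nat \<Rightarrow> int) set \<Rightarrow> bool" where
  "lower_ideal n R S \<longleftrightarrow> S \<subseteq> R \<and> (\<forall>\<beta> \<in> S. \<forall>\<alpha> \<in> R. root_le n \<alpha> \<beta> \<longrightarrow> \<alpha> \<in> S)"

definition Theta :: "nat \<Rightarrow> nat \<Rightarrow> (nat \<Rightarrow> int) set set" where
  "Theta k n = {S. S \<subseteq> base_region k n \<union> top_region k \<and>
     lower_ideal n (base_region k n) (S \<inter> base_region k n) \<and>
     lower_ideal n (top_region k) (S \<inter> top_region k) \<and>
     (\<forall>a b. 1 \<le> a \<longrightarrow> a < b \<longrightarrow> b \<le> k \<longrightarrow>
        (card (S \<inter> (diamond k n (k + 1 - a) \<union> diamond k n (k + 1 - b))) > 2 * n - 2 * k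
            \<longrightarrow> rplus a b \<in> S) \<and>
        (card (S \<inter> (diamond k n (k + 1 - a) \<union> diamond k n (k + 1 - b))) < 2 * n - 2 * k
            \<longrightarrow> rplus a b \<notin> S))}"

end

theory Submission
  imports Defs
begin

lemma row_arith: fixes W U V :: int and b b' n :: nat
 assumes nz: "W \<noteq> 0" "\<bar>W\<bar> \<noteq> \<bar>U\<bar>" "\<bar>W\<bar> \<noteq> \<bar>V\<bar>" and V0: "V \<noteq> 0"
 and T: "(\<not> s \<and> \<not> t \<and> b \<le> b') \<or> (s \<and> t \<and> b' \<le> b) \<or> (\<not> s \<and> t \<and> \<not> (b = n \<and> b' = n))"
 and B: "(b = b' \<and> V = U) \<or> (b < b' \<and> \<bar>V\<bar> < \<bar>U\<bar>) \<or> (b' < b \<and> \<bar>U\<bar> < \<bar>V\<bar>)"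
 and P: "b < n \<longrightarrow> V > 0" "b' < n \<longrightarrow> U > 0" "b \<le> n" "b' \<le> n"
 and inv: "(\<bar>W\<bar> < \<bar>U\<bar> \<and> W < 0) \<or> (\<bar>U\<bar> < \<bar>W\<bar> \<and> (if t then U < 0 else U > 0))"
 shows "(\<bar>W\<bar> < \<bar>V\<bar> \<and> W < 0) \<or> (\<bar>V\<bar> < \<bar>W\<bar> \<and> (if s then V < 0 else V > 0))"
proof -
  have Vn: "V < 0 \<Longrightarrow> b = n" using P by (cases "b < n") auto
  have Un: "U < 0 \<Longrightarrow> b' = n" using P by (cases "b' < n") auto
  have VU: "b = b' \<Longrightarrow> V = U" using B by auto
  consider (ff) "\<not> s" "\<not> t" "b \<le> b'" | (tt) s t "b' \<le> b" | (ft) "\<not> s" t "\<not> (b = n \<and> b' = n)" using T by blast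
  then show ?thesis
  proof cases
    case ff
    then have le: "\<bar>V\<bar> \<le> \<bar>U\<bar>" using B by auto
    from inv ff consider "\<bar>W\<bar> < \<bar>U\<bar>" "W < 0" | "\<bar>U\<bar> < \<bar>W\<bar>" "U > 0" by auto
    then show ?thesis
    proof cases
      case 1
      show ?thesis
      proof (cases "\<bar>W\<bar> < \<bar>V\<bar>")
        case True then show ?thesis using 1 by simp
      next
        case False
        then have "\<bar>V\<bar> < \<bar>W\<bar>" using nz by simp
        moreover have "V > 0"
        proof (rule ccontr)
          assume "\<not> V > 0" then have "V < 0" using V0 by simp
          then have "b = n" using Vn by simp
          then have "b = b'" using ff P by simp
          then have "V = U" using VU by simp
          then show False using 1 \<open>\<bar>V\<bar> < \<bar>W\<bar>\<close> by simp
        qed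
        ultimately show ?thesis using ff by simp
      qed
    next
      case 2
      have "V > 0"
      proof (rule ccontr)
        assume "\<not> V > 0" then have "V < 0" using V0 by simp
        then have "b = n" using Vn by simp
        then have "b = b'" using ff P by simp
        then have "V = U" using VU by simp
        then show False using 2 \<open>V < 0\<close> by simp
      qed
      then show ?thesis using 2 le ff by simp
    qed
  next
    case tt
    then have le: "\<bar>U\<bar> \<le> \<bar>V\<bar>" using B by auto
    from inv tt consider "\<bar>W\<bar> < \<bar>U\<bar>" "W < 0" | "\<bar>U\<bar> < \<bar>W\<bar>" "U < 0" by auto
    then show ?thesis
    proof cases
      case 1 then show ?thesis using le by simp
    next
      case 2
      then have "b' = n" using Un by simp
      then have "b = b'" using tt P by simp
      then have "V = U" using VU by simp
      then show ?thesis using 2 tt by simp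
    qed
  next
    case ft
    from inv ft consider "\<bar>W\<bar> < \<bar>U\<bar>" "W < 0" | "\<bar>U\<bar> < \<bar>W\<bar>" "U < 0" by auto
    then show ?thesis
    proof cases
      case 1
      show ?thesis
      proof (cases "V > 0")
        case True then show ?thesis using 1 nz ft by (cases "\<bar>W\<bar> < \<bar>V\<bar>") auto
      next
        case False
        then have "V < 0" using V0 by simp
        then have "b = n" using Vn by simp
        then have "b' < b" using ft P by auto
        then have "\<bar>U\<bar> < \<bar>V\<bar>" using B by auto
        then show ?thesis using 1 by simp
      qed
    next
      case 2
      then have "b' = n" using Un by simp
      then have "b < b'" using ft P by auto
      then have "\<bar>V\<bar> < \<bar>U\<bar>" "V > 0" using B P \<open>b' = n\<close> by auto
      then show ?thesis using 2 ft by simp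
    qed
  qed
qed

lemma col_arith: fixes X Y V :: int
 assumes "Y \<noteq> 0" "\<bar>Y\<bar> \<noteq> \<bar>V\<bar>"
 and A: "(0 < Y \<longrightarrow> 0 < X \<and> X < Y)" "(X < 0 \<longrightarrow> Y < 0 \<and> \<bar>Y\<bar> < \<bar>X\<bar>)"
 and inv: "(\<bar>X\<bar> < \<bar>V\<bar> \<and> X < 0) \<or> (\<bar>V\<bar> < \<bar>X\<bar> \<and> c)"
 shows "(\<bar>Y\<bar> < \<bar>V\<bar> \<and> Y < 0) \<or> (\<bar>V\<bar> < \<bar>Y\<bar> \<and> c)"
proof (cases "Y < 0")
  case True
  then show ?thesis using assms by (cases "\<bar>Y\<bar> < \<bar>V\<bar>") auto
next
  case False
  then have "0 < Y" using assms(1) by simp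
  then have "0 < X" "X < Y" using A by auto
  then show ?thesis using inv by auto
qed


definition lin :: "nat \<Rightarrow> (nat \<Rightarrow> int) \<Rightarrow> (nat \<Rightarrow> int) \<Rightarrow> int" where
  "lin n \<phi> v = (\<Sum>j\<in>{1..n}. \<phi> j * v j)"

lemma sum_ee: "a \<in> {1..n} \<Longrightarrow> (\<Sum>j\<in>{1..n}. \<phi> j * ee a j) = \<phi> a"
  unfolding ee_def by (simp add: if_distrib cong: if_cong)

lemma lin_rplus: assumes "a \<in> {1..n}" "b \<in> {1..n}" shows "lin n \<phi> (rplus a b) = \<phi> a + \<phi> b"
  unfolding lin_def rplus_def by (simp only: distrib_left sum.distrib sum_ee assms)

lemma lin_rminus: assumes "a \<in> {1..n}" "b \<in> {1..n}" shows "lin n \<phi> (rminus a b) = \<phi> a - \<phi> b"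
  unfolding lin_def rminus_def by (simp only: right_diff_distrib sum_subtractf sum_ee assms)

lemma root_le_mono:
  assumes "root_le n \<alpha> \<beta>" "2 \<le> n" "\<forall>i\<in>{1..<n}. \<phi> (Suc i) \<le> \<phi> i" "0 \<le> \<phi> (n-1) + \<phi> n"
  shows "lin n \<phi> \<alpha> \<le> lin n \<phi> \<beta>"
proof -
  obtain c :: "nat \<Rightarrow> nat" where c: "\<And>j. \<beta> j - \<alpha> j = (\<Sum>i\<in>{1..<n}. int (c i) * rminus i (Suc i) j)
                     + int (c n) * rplus (n - 1) n j"
    using assms(1) unfolding root_le_def by blast
  have "lin n \<phi> \<beta> - lin n \<phi> \<alpha> = (\<Sum>j\<in>{1..n}. \<phi> j * (\<beta> j - \<alpha> j))"
    unfolding lin_def by (simp add: right_diff_distrib sum_subtractf)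
  also have "\<dots> = (\<Sum>j\<in>{1..n}. (\<Sum>i\<in>{1..<n}. int (c i) * (\<phi> j * rminus i (Suc i) j)))
                 + int (c n) * (\<Sum>j\<in>{1..n}. \<phi> j * rplus (n - 1) n j)"
    unfolding c by (simp add: distrib_left sum.distrib sum_distrib_left sum_distrib_right algebra_simps)
  also have "\<dots> = (\<Sum>i\<in>{1..<n}. int (c i) * lin n \<phi> (rminus i (Suc i)))
                 + int (c n) * lin n \<phi> (rplus (n - 1) n)"
    unfolding lin_def by (subst sum.swap) (simp add: sum_distrib_left)
  also have "\<dots> \<ge> 0"
  proof (intro add_nonneg_nonneg sum_nonneg mult_nonneg_nonneg)
    fix i assume i: "i \<in> {1..<n}"
    then show "0 \<le> lin n \<phi> (rminus i (Suc i))" using assms(3) by (simp add: lin_rminus)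
  next
    show "0 \<le> lin n \<phi> (rplus (n - 1) n)" using assms(2,4) by (simp add: lin_rplus)
  qed auto
  finally show ?thesis by simp
qed



lemma act_ee: assumes "a \<in> {1..n}"
  shows "(\<Sum>x\<in>{1..n}. if nat \<bar>w x\<bar> = j then sgn (w x) * ee a x else 0) = (if nat \<bar>w a\<bar> = j then sgn (w a) else 0)"
proof -
  have "(\<Sum>x\<in>{1..n}. if nat \<bar>w x\<bar> = j then sgn (w x) * ee a x else 0)
      = (\<Sum>x\<in>{1..n}. if x = a then (if nat \<bar>w a\<bar> = j then sgn (w a) else 0) else 0)"
    by (rule sum.cong) (auto simp: ee_def)
  also have "\<dots> = (if nat \<bar>w a\<bar> = j then sgn (w a) else 0)" using assms by simp
  finally show ?thesis .
qed

lemma act_rplus: assumes "a \<in> {1..n}" "b \<in> {1..n}"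
  shows "act n w (rplus a b) = (\<lambda>j. sgn (w a) * ee (nat \<bar>w a\<bar>) j + sgn (w b) * ee (nat \<bar>w b\<bar>) j)"
proof
  fix j
  have "act n w (rplus a b) j = (\<Sum>x\<in>{1..n}. (if nat \<bar>w x\<bar> = j then sgn (w x) * ee a x else 0)
       + (if nat \<bar>w x\<bar> = j then sgn (w x) * ee b x else 0))"
    unfolding act_def rplus_def by (rule sum.cong) (auto simp: distrib_left)
  also have "\<dots> = (if nat \<bar>w a\<bar> = j then sgn (w a) else 0) + (if nat \<bar>w b\<bar> = j then sgn (w b) else 0)"
    by (simp only: sum.distrib act_ee assms)
  finally show "act n w (rplus a b) j = sgn (w a) * ee (nat \<bar>w a\<bar>) j + sgn (w b) * ee (nat \<bar>w b\<bar>) j"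
    by (auto simp: ee_def)
qed

lemma act_rminus: assumes "a \<in> {1..n}" "b \<in> {1..n}"
  shows "act n w (rminus a b) = (\<lambda>j. sgn (w a) * ee (nat \<bar>w a\<bar>) j - sgn (w b) * ee (nat \<bar>w b\<bar>) j)"
proof
  fix j
  have "act n w (rminus a b) j = (\<Sum>x\<in>{1..n}. (if nat \<bar>w x\<bar> = j then sgn (w x) * ee a x else 0)
       - (if nat \<bar>w x\<bar> = j then sgn (w x) * ee b x else 0))"
    unfolding act_def rminus_def by (rule sum.cong) (auto simp: right_diff_distrib)
  also have "\<dots> = (if nat \<bar>w a\<bar> = j then sgn (w a) else 0) - (if nat \<bar>w b\<bar> = j then sgn (w b) else 0)"
    by (simp only: sum_subtractf act_ee assms)
  finally show "act n w (rminus a b) j = sgn (w a) * ee (nat \<bar>w a\<bar>) j - sgn (w b) * ee (nat \<bar>w b\<bar>) j"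
    by (auto simp: ee_def)
qed

lemma pos_root_vec:
  assumes "p \<noteq> q" "p \<in> {1..n}" "q \<in> {1..n}" "s = 1 \<or> s = -1" "t = 1 \<or> t = -1"
  shows "(\<lambda>j. s * ee p j + t * ee q j) \<in> pos_roots n \<longleftrightarrow> (if p < q then s = 1 else t = 1)"
proof
  assume "(\<lambda>j. s * ee p j + t * ee q j) \<in> pos_roots n"
  then obtain c d where cd: "1 \<le> c" "c < d" "d \<le> n"
     and eq: "(\<lambda>j. s * ee p j + t * ee q j) = rplus c d \<or> (\<lambda>j. s * ee p j + t * ee q j) = rminus c d"
    unfolding pos_roots_def by blast
  have h: "\<And>j. s * ee p j + t * ee q j = ee c j + ee d j \<or> (\<forall>j. s * ee p j + t * ee q j = ee c j - ee d j)"
    using eq by (auto simp: rplus_def rminus_def fun_eq_iff)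
  have e: "\<forall>j. s * ee p j + t * ee q j = ee c j + ee d j \<or> (\<forall>j. s * ee p j + t * ee q j = ee c j - ee d j)"
    using eq by (auto simp: rplus_def rminus_def fun_eq_iff)
  then consider "\<forall>j. s * ee p j + t * ee q j = ee c j + ee d j" | "\<forall>j. s * ee p j + t * ee q j = ee c j - ee d j"
    by blast
  then show "(if p < q then s = 1 else t = 1)"
  proof cases
    case 1
    from 1[rule_format, of p] 1[rule_format, of q] 1[rule_format, of c] 1[rule_format, of d]
    show ?thesis using assms cd by (auto simp: ee_def split: if_splits)
  next
    case 2
    from 2[rule_format, of p] 2[rule_format, of q] 2[rule_format, of c] 2[rule_format, of d]
    show ?thesis using assms cd by (auto simp: ee_def split: if_splits)
  qed
next
  assume h: "(if p < q then s = 1 else t = 1)"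
  show "(\<lambda>j. s * ee p j + t * ee q j) \<in> pos_roots n"
  proof (cases "p < q")
    case True
    then have "s = 1" using h by simp
    then show ?thesis using assms True unfolding pos_roots_def
      by (cases "t = 1") (auto simp: rplus_def rminus_def fun_eq_iff)
  next
    case False
    then have "q < p" "t = 1" using h assms(1) by auto
    show ?thesis
    proof (cases "s = 1")
      case True
      then have "(\<lambda>j. s * ee p j + t * ee q j) = rplus q p" using \<open>t = 1\<close> by (auto simp: rplus_def fun_eq_iff)
      then show ?thesis using assms \<open>q < p\<close> unfolding pos_roots_def by auto
    next
      case False
      then have "(\<lambda>j. s * ee p j + t * ee q j) = rminus q p" using \<open>t = 1\<close> assms(4) by (auto simp: rminus_def fun_eq_iff)
      then show ?thesis using assms \<open>q < p\<close> unfolding pos_roots_def by auto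
    qed
  qed
qed



lemma sp_range: assumes "signed_perm n w" "a \<in> {1..n}"
  shows "nat \<bar>w a\<bar> \<in> {1..n}" "w a \<noteq> 0"
  using assms bij_betwE unfolding signed_perm_def by fastforce+

lemma sp_inj: assumes "signed_perm n w" "a \<in> {1..n}" "b \<in> {1..n}" "a \<noteq> b"
  shows "\<bar>w a\<bar> \<noteq> \<bar>w b\<bar>"
proof
  assume "\<bar>w a\<bar> = \<bar>w b\<bar>"
  then have "nat \<bar>w a\<bar> = nat \<bar>w b\<bar>" by simp
  then show False using assms unfolding signed_perm_def bij_betw_def inj_on_def by blast
qed

lemma rplus_pos: "1 \<le> a \<Longrightarrow> a < b \<Longrightarrow> b \<le> n \<Longrightarrow> rplus a b \<in> pos_roots n"
  unfolding pos_roots_def by blast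
lemma rminus_pos: "1 \<le> a \<Longrightarrow> a < b \<Longrightarrow> b \<le> n \<Longrightarrow> rminus a b \<in> pos_roots n"
  unfolding pos_roots_def by blast

lemma inv_rplus: assumes "signed_perm n w" "1 \<le> a" "a < b" "b \<le> n"
  shows "rplus a b \<in> Inv n w \<longleftrightarrow> (\<bar>w a\<bar> < \<bar>w b\<bar> \<and> w a < 0) \<or> (\<bar>w b\<bar> < \<bar>w a\<bar> \<and> w b < 0)"
proof -
  have A: "a \<in> {1..n}" "b \<in> {1..n}" using assms by auto
  note r = sp_range[OF assms(1) A(1)] sp_range[OF assms(1) A(2)]
  have ne: "\<bar>w a\<bar> \<noteq> \<bar>w b\<bar>" using sp_inj[OF assms(1) A] assms by simp
  have "(\<lambda>j. - act n w (rplus a b) j) = (\<lambda>j. (- sgn (w a)) * ee (nat \<bar>w a\<bar>) j + (- sgn (w b)) * ee (nat \<bar>w b\<bar>) j)"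
    unfolding act_rplus[OF A] by simp
  moreover have "\<dots> \<in> pos_roots n \<longleftrightarrow> (if nat \<bar>w a\<bar> < nat \<bar>w b\<bar> then - sgn (w a) = 1 else - sgn (w b) = 1)"
    apply (rule pos_root_vec)
    using r ne by (auto simp: sgn_if)
  ultimately show ?thesis
    unfolding Inv_def using rplus_pos[OF assms(2-4)] r ne by (auto simp: sgn_if)
qed

lemma inv_rminus: assumes "signed_perm n w" "1 \<le> a" "a < b" "b \<le> n"
  shows "rminus a b \<in> Inv n w \<longleftrightarrow> (\<bar>w a\<bar> < \<bar>w b\<bar> \<and> w a < 0) \<or> (\<bar>w b\<bar> < \<bar>w a\<bar> \<and> w b > 0)"
proof -
  have A: "a \<in> {1..n}" "b \<in> {1..n}" using assms by auto
  note r = sp_range[OF assms(1) A(1)] sp_range[OF assms(1) A(2)]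
  have ne: "\<bar>w a\<bar> \<noteq> \<bar>w b\<bar>" using sp_inj[OF assms(1) A] assms by simp
  have "(\<lambda>j. - act n w (rminus a b) j) = (\<lambda>j. (- sgn (w a)) * ee (nat \<bar>w a\<bar>) j + (sgn (w b)) * ee (nat \<bar>w b\<bar>) j)"
    unfolding act_rminus[OF A] by simp
  moreover have "\<dots> \<in> pos_roots n \<longleftrightarrow> (if nat \<bar>w a\<bar> < nat \<bar>w b\<bar> then - sgn (w a) = 1 else sgn (w b) = 1)"
    apply (rule pos_root_vec)
    using r ne by (auto simp: sgn_if)
  ultimately show ?thesis
    unfolding Inv_def using rminus_pos[OF assms(2-4)] r ne by (auto simp: sgn_if)
qed



lemma W_struct:
  assumes "w \<in> W_OG k n" "k < n"
  shows "signed_perm n w"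
    and "\<And>a b. 1 \<le> a \<Longrightarrow> a < b \<Longrightarrow> b \<le> k \<Longrightarrow> 0 < w b \<Longrightarrow> 0 < w a \<and> w a < w b"
    and "\<And>a b. 1 \<le> a \<Longrightarrow> a < b \<Longrightarrow> b \<le> k \<Longrightarrow> w a < 0 \<Longrightarrow> w b < 0 \<and> \<bar>w b\<bar> < \<bar>w a\<bar>"
    and "\<And>a b. k < a \<Longrightarrow> a < b \<Longrightarrow> b \<le> n \<Longrightarrow> 0 < w a \<and> \<bar>w a\<bar> < \<bar>w b\<bar>"
proof -
  obtain r where r: "r \<le> k"
        "(\<forall>a \<in> {1..k - r}. w a > 0)"
        "(\<forall>a b. 1 \<le> a \<longrightarrow> a < b \<longrightarrow> b \<le> k - r \<longrightarrow> w a < w b)"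
        "(\<forall>a \<in> {k - r + 1..k}. w a < 0)"
        "(\<forall>a b. k - r < a \<longrightarrow> a < b \<longrightarrow> b \<le> k \<longrightarrow> \<bar>w a\<bar> > \<bar>w b\<bar>)"
        "(\<forall>a \<in> {k + 1..<n}. w a > 0)"
        "(\<forall>a b. k < a \<longrightarrow> a < b \<longrightarrow> b \<le> n \<longrightarrow> \<bar>w a\<bar> < \<bar>w b\<bar>)"
    and sp: "signed_perm n w"
    using assms(1) unfolding W_OG_def by blast
  show "signed_perm n w" by (rule sp)
  show "0 < w a \<and> w a < w b" if "1 \<le> a" "a < b" "b \<le> k" "0 < w b" for a b
  proof -
    have "b \<le> k - r"
    proof (rule ccontr)
      assume "\<not> b \<le> k - r" then have "w b < 0" using r(4) that by auto
      then show False using that by simp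
    qed
    then show ?thesis using r(2,3) that by auto
  qed
  show "w b < 0 \<and> \<bar>w b\<bar> < \<bar>w a\<bar>" if "1 \<le> a" "a < b" "b \<le> k" "w a < 0" for a b
  proof -
    have "k - r < a"
    proof (rule ccontr)
      assume "\<not> k - r < a" then have "w a > 0" using r(2) that by auto
      then show False using that by simp
    qed
    then show ?thesis using r(4,5) that by auto
  qed
  show "0 < w a \<and> \<bar>w a\<bar> < \<bar>w b\<bar>" if "k < a" "a < b" "b \<le> n" for a b
    using r(6,7) that by auto
qed



definition rt :: "bool \<Rightarrow> nat \<Rightarrow> nat \<Rightarrow> nat \<Rightarrow> int" where
  "rt s a b = (if s then rplus a b else rminus a b)"

lemma lin_rt: "a \<in> {1..n} \<Longrightarrow> b \<in> {1..n} \<Longrightarrow> lin n \<phi> (rt s a b) = \<phi> a + (if s then \<phi> b else - \<phi> b)"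
  unfolding rt_def using lin_rplus lin_rminus by auto

lemma inv_rt: assumes "signed_perm n w" "1 \<le> a" "a < b" "b \<le> n"
  shows "rt s a b \<in> Inv n w \<longleftrightarrow> (\<bar>w a\<bar> < \<bar>w b\<bar> \<and> w a < 0) \<or> (\<bar>w b\<bar> < \<bar>w a\<bar> \<and> (if s then w b < 0 else w b > 0))"
  unfolding rt_def using inv_rplus[OF assms] inv_rminus[OF assms] by auto

lemma mono_L: "root_le n \<alpha> \<beta> \<Longrightarrow> 2 \<le> n \<Longrightarrow> lin n (\<lambda>j. if j \<le> m then 1 else 0) \<alpha> \<le> lin n (\<lambda>j. if j \<le> m then 1 else 0) \<beta>"
  by (rule root_le_mono) auto

lemma mono_T: "root_le n \<alpha> \<beta> \<Longrightarrow> 2 \<le> n \<Longrightarrow> lin n (\<lambda>j. if j < n then 1 else -1) \<alpha> \<le> lin n (\<lambda>j. if j < n then 1 else -1) \<beta>"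
  by (rule root_le_mono) auto

lemma base_step:
  assumes w: "w \<in> W_OG k n" and kn: "1 \<le> k" "k < n"
    and ab: "1 \<le> a" "a \<le> k" "k < b" "b \<le> n" and ab': "1 \<le> a'" "a' \<le> k" "k < b'" "b' \<le> n"
    and le: "root_le n (rt s a b) (rt t a' b')" and inv: "rt t a' b' \<in> Inv n w"
  shows "rt s a b \<in> Inv n w"
proof -
  have n2: "2 \<le> n" using kn by simp
  have I: "a \<in> {1..n}" "b \<in> {1..n}" "a' \<in> {1..n}" "b' \<in> {1..n}" using ab ab' kn by auto
  have f1: "lin n (\<lambda>j. if j \<le> a then 1 else 0) (rt s a b) \<le> lin n (\<lambda>j. if j \<le> a then 1 else 0) (rt t a' b')"
    using mono_L[OF le n2] .
  have f2: "lin n (\<lambda>j. if j \<le> b then 1 else 0) (rt s a b) \<le> lin n (\<lambda>j. if j \<le> b then 1 else 0) (rt t a' b')"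
    using mono_L[OF le n2] .
  have f3: "lin n (\<lambda>j. if j \<le> b' then 1 else 0) (rt s a b) \<le> lin n (\<lambda>j. if j \<le> b' then 1 else 0) (rt t a' b')"
    using mono_L[OF le n2] .
  have f4: "lin n (\<lambda>j. if j < n then 1 else -1) (rt s a b) \<le> lin n (\<lambda>j. if j < n then 1 else -1) (rt t a' b')"
    using mono_T[OF le n2] .
  have f5: "lin n (\<lambda>j. if j \<le> n then 1 else 0) (rt s a b) \<le> lin n (\<lambda>j. if j \<le> n then 1 else 0) (rt t a' b')"
    using mono_L[OF le n2] .
  note f = f1 f2 f3 f4 f5
  note f = f[unfolded lin_rt[OF I(1,2)] lin_rt[OF I(3,4)]]
  have aa: "a' \<le> a" using f(1) ab ab' by (auto split: if_splits)
  have T: "(\<not> s \<and> \<not> t \<and> b \<le> b') \<or> (s \<and> t \<and> b' \<le> b) \<or> (\<not> s \<and> t \<and> \<not> (b = n \<and> b' = n))"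
    using f(2-5) ab ab' by (auto split: if_splits)
  have sp: "signed_perm n w" using W_struct(1)[OF w kn(2)] .
  have ia: "rt s a b \<in> Inv n w \<longleftrightarrow> (\<bar>w a\<bar> < \<bar>w b\<bar> \<and> w a < 0) \<or> (\<bar>w b\<bar> < \<bar>w a\<bar> \<and> (if s then w b < 0 else w b > 0))"
    using inv_rt[OF sp] ab by simp
  have ib: "(\<bar>w a'\<bar> < \<bar>w b'\<bar> \<and> w a' < 0) \<or> (\<bar>w b'\<bar> < \<bar>w a'\<bar> \<and> (if t then w b' < 0 else w b' > 0))"
    using inv_rt[OF sp, of a' b' t] ab' inv by simp
  have nz: "w a \<noteq> 0" "w a' \<noteq> 0" "w b \<noteq> 0" "w b' \<noteq> 0" using sp_range(2)[OF sp] I by auto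
  have inj: "\<bar>w a\<bar> \<noteq> \<bar>w b\<bar>" "\<bar>w a'\<bar> \<noteq> \<bar>w b'\<bar>" "\<bar>w a\<bar> \<noteq> \<bar>w b'\<bar>" "\<bar>w a'\<bar> \<noteq> \<bar>w b\<bar>"
    using sp_inj[OF sp] I ab ab' by auto
  have B: "(b = b' \<and> w b = w b') \<or> (b < b' \<and> \<bar>w b\<bar> < \<bar>w b'\<bar>) \<or> (b' < b \<and> \<bar>w b'\<bar> < \<bar>w b\<bar>)"
    using W_struct(4)[OF w kn(2), of b b'] W_struct(4)[OF w kn(2), of b' b] ab ab' by (cases b b' rule: linorder_cases) auto
  have P: "b < n \<longrightarrow> 0 < w b" "b' < n \<longrightarrow> 0 < w b'"
    using W_struct(4)[OF w kn(2), of b n] W_struct(4)[OF w kn(2), of b' n] ab ab' by auto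
  have row: "(\<bar>w a'\<bar> < \<bar>w b\<bar> \<and> w a' < 0) \<or> (\<bar>w b\<bar> < \<bar>w a'\<bar> \<and> (if s then w b < 0 else w b > 0))"
    by (rule row_arith[OF nz(2) inj(2) inj(4) nz(3) T B P _ _ ib]) (use ab ab' in auto)
  show ?thesis
  proof (cases "a' = a")
    case True then show ?thesis using row ia by simp
  next
    case False
    then have "a' < a" using aa by simp
    have A: "(0 < w a \<longrightarrow> 0 < w a' \<and> w a' < w a)" "(w a' < 0 \<longrightarrow> w a < 0 \<and> \<bar>w a\<bar> < \<bar>w a'\<bar>)"
      using W_struct(2,3)[OF w kn(2), of a' a] ab ab' \<open>a' < a\<close> by auto
    show ?thesis unfolding ia by (rule col_arith[OF nz(1) inj(1) A row])
  qed
qed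



lemma top_crit:
  assumes w: "w \<in> W_OG k n" and kn: "k < n" and ab: "1 \<le> a" "a < b" "b \<le> k"
  shows "rplus a b \<in> Inv n w \<longleftrightarrow> w b < 0 \<and> (w a < 0 \<or> \<bar>w b\<bar> < w a)"
proof -
  have sp: "signed_perm n w" using W_struct(1)[OF w kn] .
  have I: "a \<in> {1..n}" "b \<in> {1..n}" using ab kn by auto
  have nz: "w a \<noteq> 0" "w b \<noteq> 0" using sp_range(2)[OF sp] I by auto
  have inj: "\<bar>w a\<bar> \<noteq> \<bar>w b\<bar>" using sp_inj[OF sp I] ab by simp
  have s2: "0 < w b \<Longrightarrow> 0 < w a \<and> w a < w b" and s3: "w a < 0 \<Longrightarrow> w b < 0 \<and> \<bar>w b\<bar> < \<bar>w a\<bar>"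
    using W_struct(2,3)[OF w kn, of a b] ab by auto
  have bn: "b \<le> n" using ab kn by simp
  show ?thesis unfolding inv_rplus[OF sp ab(1,2) bn]
  proof
    assume h: "\<bar>w a\<bar> < \<bar>w b\<bar> \<and> w a < 0 \<or> \<bar>w b\<bar> < \<bar>w a\<bar> \<and> w b < 0"
    show "w b < 0 \<and> (w a < 0 \<or> \<bar>w b\<bar> < w a)"
    proof (cases "w a < 0")
      case True then show ?thesis using s3 by simp
    next
      case False then show ?thesis using h by auto
    qed
  next
    assume h: "w b < 0 \<and> (w a < 0 \<or> \<bar>w b\<bar> < w a)"
    show "\<bar>w a\<bar> < \<bar>w b\<bar> \<and> w a < 0 \<or> \<bar>w b\<bar> < \<bar>w a\<bar> \<and> w b < 0"
    proof (cases "w a < 0")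
      case True then show ?thesis using s3 h by simp
    next
      case False then show ?thesis using h by auto
    qed
  qed
qed

lemma top_step:
  assumes w: "w \<in> W_OG k n" and kn: "1 \<le> k" "k < n"
    and ab: "1 \<le> a" "a < b" "b \<le> k" and ab': "1 \<le> a'" "a' < b'" "b' \<le> k"
    and le: "root_le n (rplus a b) (rplus a' b')" and inv: "rplus a' b' \<in> Inv n w"
  shows "rplus a b \<in> Inv n w"
proof -
  have n2: "2 \<le> n" using kn by simp
  have I: "a \<in> {1..n}" "b \<in> {1..n}" "a' \<in> {1..n}" "b' \<in> {1..n}" using ab ab' kn by auto
  have f1: "lin n (\<lambda>j. if j \<le> a then 1 else 0) (rplus a b) \<le> lin n (\<lambda>j. if j \<le> a then 1 else 0) (rplus a' b')"
    using mono_L[OF le n2] .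
  have f2: "lin n (\<lambda>j. if j \<le> b then 1 else 0) (rplus a b) \<le> lin n (\<lambda>j. if j \<le> b then 1 else 0) (rplus a' b')"
    using mono_L[OF le n2] .
  note f = f1 f2
  note f = f[unfolded lin_rplus[OF I(1,2)] lin_rplus[OF I(3,4)]]
  have aa: "a' \<le> a" using f(1) ab ab' by (auto split: if_splits)
  have bb: "b' \<le> b" using f(2) ab ab' by (auto split: if_splits)
  have A: "0 < w a \<longrightarrow> 0 < w a' \<and> w a' \<le> w a"
    using W_struct(2)[OF w kn(2), of a' a] aa ab ab' by (cases "a' = a") auto
  have B: "w b' < 0 \<longrightarrow> w b < 0 \<and> \<bar>w b\<bar> \<le> \<bar>w b'\<bar>"
    using W_struct(3)[OF w kn(2), of b' b] bb ab ab' by (cases "b' = b") auto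
  have ib: "w b' < 0 \<and> (w a' < 0 \<or> \<bar>w b'\<bar> < w a')" using top_crit[OF w kn(2) ab'] inv by blast
  have nz: "w a \<noteq> 0" using sp_range(2)[OF W_struct(1)[OF w kn(2)]] I by auto
  show ?thesis unfolding top_crit[OF w kn(2) ab]
  proof (cases "w a < 0")
    case True then show "w b < 0 \<and> (w a < 0 \<or> \<bar>w b\<bar> < w a)" using ib B by simp
  next
    case False
    then have "0 < w a" using nz by simp
    then show "w b < 0 \<and> (w a < 0 \<or> \<bar>w b\<bar> < w a)" using ib A B by auto
  qed
qed

lemma inv_subset:
  assumes w: "w \<in> W_OG k n" and kn: "1 \<le> k" "k < n"
  shows "Inv n w \<subseteq> base_region k n \<union> top_region k"
proof
  fix x assume x: "x \<in> Inv n w"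
  have sp: "signed_perm n w" using W_struct(1)[OF w kn(2)] .
  from x have "x \<in> pos_roots n" unfolding Inv_def by simp
  then obtain a b where ab: "1 \<le> a" "a < b" "b \<le> n" and xe: "x = rplus a b \<or> x = rminus a b"
    unfolding pos_roots_def by blast
  have I: "a \<in> {1..n}" "b \<in> {1..n}" using ab by auto
  have nz: "w a \<noteq> 0" "w b \<noteq> 0" using sp_range(2)[OF sp] I by auto
  consider "a \<le> k" "k < b" | "b \<le> k" | "k < a" using ab by linarith
  then show "x \<in> base_region k n \<union> top_region k"
  proof cases
    case 1 then show ?thesis using xe ab unfolding base_region_def by blast
  next
    case 2
    show ?thesis
    proof (cases "x = rplus a b")
      case True then show ?thesis using 2 ab unfolding top_region_def by blast
    next
      case False
      then have xm: "x = rminus a b" using xe by simp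
      have s2: "0 < w b \<Longrightarrow> 0 < w a \<and> w a < w b" and s3: "w a < 0 \<Longrightarrow> w b < 0 \<and> \<bar>w b\<bar> < \<bar>w a\<bar>"
        using W_struct(2,3)[OF w kn(2), of a b] ab 2 by auto
      have "\<not> ((\<bar>w a\<bar> < \<bar>w b\<bar> \<and> w a < 0) \<or> (\<bar>w b\<bar> < \<bar>w a\<bar> \<and> w b > 0))"
        using s2 s3 by auto
      then have "x \<notin> Inv n w" using xm inv_rminus[OF sp ab] by simp
      then show ?thesis using x by simp
    qed
  next
    case 3
    have s4: "0 < w a \<and> \<bar>w a\<bar> < \<bar>w b\<bar>" using W_struct(4)[OF w kn(2), of a b] ab 3 by auto
    then have "x \<notin> Inv n w" using xe inv_rminus[OF sp ab] inv_rplus[OF sp ab] by auto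
    then show ?thesis using x by simp
  qed
qed



lemma rplus_at: "rplus a b j = (if j = a then 1 else 0) + (if j = b then 1 else 0)"
  by (simp add: rplus_def ee_def)
lemma rminus_at: "rminus a b j = (if j = a then 1 else 0) - (if j = b then 1 else 0)"
  by (simp add: rminus_def ee_def)

lemma rpm_ne: "a' < b' \<Longrightarrow> rplus a b \<noteq> rminus a' b'"
proof
  assume "a' < b'" "rplus a b = rminus a' b'"
  then have "rplus a b b' = rminus a' b' b'" by simp
  then show False using \<open>a' < b'\<close> by (simp add: rplus_at rminus_at split: if_splits)
qed

lemma rplus_inj: assumes "a < b" "a' < b'" "rplus a b = rplus a' b'" shows "a = a' \<and> b = b'"
proof -
  have "rplus a b a = rplus a' b' a" "rplus a b b = rplus a' b' b" "rplus a b a' = rplus a' b' a'"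
    using assms(3) by simp_all
  then show ?thesis using assms(1,2) by (simp add: rplus_at split: if_splits)
qed

lemma rminus_inj: assumes "a < b" "a' < b'" "rminus a b = rminus a' b'" shows "a = a' \<and> b = b'"
proof -
  have "rminus a b a = rminus a' b' a" "rminus a b b = rminus a' b' b"
    using assms(3) by simp_all
  then show ?thesis using assms(1,2) by (simp add: rminus_at split: if_splits)
qed

lemma card4: assumes "distinct [x1, x2, x3, x4]"
  shows "card (S \<inter> {x1, x2, x3, x4}) = of_bool (x1 \<in> S) + of_bool (x2 \<in> S) + of_bool (x3 \<in> S) + of_bool (x4 \<in> S)"
  using assms by (cases "x1 \<in> S"; cases "x2 \<in> S"; cases "x3 \<in> S"; cases "x4 \<in> S") (auto simp: Int_insert_right)

lemma row_count:
  assumes w: "w \<in> W_OG k n" and kn: "k < n" and x: "1 \<le> x" "x \<le> k" and c: "k < c" "c \<le> n"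
  shows "(of_bool (rminus x c \<in> Inv n w) + of_bool (rplus x c \<in> Inv n w) :: nat)
       = (if 0 < w x then (if \<bar>w c\<bar> < \<bar>w x\<bar> then 1 else 0) else (if \<bar>w x\<bar> < \<bar>w c\<bar> then 2 else 1))"
proof -
  have sp: "signed_perm n w" using W_struct(1)[OF w kn] .
  have xc: "1 \<le> x" "x < c" "c \<le> n" using x c by auto
  have I: "x \<in> {1..n}" "c \<in> {1..n}" using xc by auto
  have nz: "w x \<noteq> 0" "w c \<noteq> 0" using sp_range(2)[OF sp] I by auto
  have inj: "\<bar>w x\<bar> \<noteq> \<bar>w c\<bar>" using sp_inj[OF sp I] xc by simp
  show ?thesis unfolding inv_rminus[OF sp xc] inv_rplus[OF sp xc]
    using nz inj by (cases "0 < w x"; cases "0 < w c"; cases "\<bar>w c\<bar> < \<bar>w x\<bar>") auto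
qed

lemma diamond_eq: "a \<le> k \<Longrightarrow> diamond k n (k + 1 - a) = {rplus a c | c. k < c \<and> c \<le> n} \<union> {rminus a c | c. k < c \<and> c \<le> n}"
  unfolding diamond_def by simp

lemma card_pair:
  assumes w: "w \<in> W_OG k n" and kn: "1 \<le> k" "k < n" and ab: "1 \<le> a" "a < b" "b \<le> k"
  defines "S \<equiv> Inv n w"
  defines "g \<equiv> \<lambda>c. (of_bool (rminus a c \<in> S) + of_bool (rplus a c \<in> S))
                   + (of_bool (rminus b c \<in> S) + of_bool (rplus b c \<in> S) :: nat)"
  shows "card (S \<inter> (diamond k n (k + 1 - a) \<union> diamond k n (k + 1 - b))) = (\<Sum>c\<in>{k<..n}. g c)"
proof -
  define Q where "Q = (\<lambda>c. {rminus a c, rplus a c, rminus b c, rplus b c})"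
  have eq: "S \<inter> (diamond k n (k + 1 - a) \<union> diamond k n (k + 1 - b)) = (\<Union>c\<in>{k<..n}. S \<inter> Q c)"
  proof -
    have Da: "diamond k n (k + 1 - a) = {rplus a c | c. k < c \<and> c \<le> n} \<union> {rminus a c | c. k < c \<and> c \<le> n}"
      using diamond_eq ab by simp
    have Db: "diamond k n (k + 1 - b) = {rplus b c | c. k < c \<and> c \<le> n} \<union> {rminus b c | c. k < c \<and> c \<le> n}"
      using diamond_eq ab by simp
    show ?thesis unfolding Da Db by (auto simp: Q_def)
  qed
  have disj: "(S \<inter> Q c) \<inter> (S \<inter> Q c') = {}" if "c \<in> {k<..n}" "c' \<in> {k<..n}" "c \<noteq> c'" for c c'
  proof -
    have lt: "a < c" "b < c" "a < c'" "b < c'" using that ab by auto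
    show ?thesis unfolding Q_def
      using that lt rpm_ne rplus_inj rminus_inj rpm_ne[THEN not_sym] by auto
  qed
  have "card (\<Union>c\<in>{k<..n}. S \<inter> Q c) = (\<Sum>c\<in>{k<..n}. card (S \<inter> Q c))"
    apply (rule card_UN_disjoint)
    subgoal by simp
    subgoal by (simp add: Q_def)
    subgoal using disj by blast
    done
  also have "\<dots> = (\<Sum>c\<in>{k<..n}. g c)"
  proof (rule sum.cong)
    fix c assume "c \<in> {k<..n}"
    then have lt: "a < c" "b < c" using ab by auto
    have d: "distinct [rminus a c, rplus a c, rminus b c, rplus b c]"
      using lt ab rpm_ne rpm_ne[THEN not_sym] rplus_inj[of a c b c] rminus_inj[of a c b c] by auto
    show "card (S \<inter> Q c) = g c" unfolding Q_def g_def card4[OF d] by simp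
  qed simp
  finally show ?thesis using eq by simp
qed



lemma base_rt: assumes "x \<in> base_region k n" shows "\<exists>s a b. x = rt s a b \<and> 1 \<le> a \<and> a \<le> k \<and> k < b \<and> b \<le> n"
proof -
  from assms consider (p) a b where "x = rplus a b" "1 \<le> a" "a \<le> k" "k < b" "b \<le> n"
    | (m) a b where "x = rminus a b" "1 \<le> a" "a \<le> k" "k < b" "b \<le> n"
    unfolding base_region_def by blast
  then show ?thesis
  proof cases
    case p then show ?thesis by (intro exI[of _ True] exI[of _ a] exI[of _ b]) (simp add: rt_def)
  next
    case m then show ?thesis by (intro exI[of _ False] exI[of _ a] exI[of _ b]) (simp add: rt_def)
  qed
qed

lemma pointwise:
  assumes w: "w \<in> W_OG k n" and kn: "1 \<le> k" "k < n" and ab: "1 \<le> a" "a < b" "b \<le> k"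
    and c: "k < c" "c \<le> n"
  defines "S \<equiv> Inv n w"
  defines "g \<equiv> (of_bool (rminus a c \<in> S) + of_bool (rplus a c \<in> S))
                   + (of_bool (rminus b c \<in> S) + of_bool (rplus b c \<in> S) :: nat)"
  shows "(rplus a b \<in> S \<longrightarrow> 2 \<le> g) \<and> (rplus a b \<notin> S \<longrightarrow> g \<le> 2)"
proof -
  have sp: "signed_perm n w" using W_struct(1)[OF w kn(2)] .
  have I: "a \<in> {1..n}" "b \<in> {1..n}" "c \<in> {1..n}" using ab c kn by auto
  have nz: "w a \<noteq> 0" "w b \<noteq> 0" "w c \<noteq> 0" using sp_range(2)[OF sp] I by auto
  have inj: "\<bar>w a\<bar> \<noteq> \<bar>w b\<bar>" "\<bar>w a\<bar> \<noteq> \<bar>w c\<bar>" "\<bar>w b\<bar> \<noteq> \<bar>w c\<bar>"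
    using sp_inj[OF sp] I ab c by auto
  have s3: "w a < 0 \<Longrightarrow> w b < 0 \<and> \<bar>w b\<bar> < \<bar>w a\<bar>"
    using W_struct(3)[OF w kn(2), of a b] ab by auto
  have g: "g = (if 0 < w a then (if \<bar>w c\<bar> < \<bar>w a\<bar> then 1 else 0) else (if \<bar>w a\<bar> < \<bar>w c\<bar> then 2 else 1))
             + (if 0 < w b then (if \<bar>w c\<bar> < \<bar>w b\<bar> then 1 else 0) else (if \<bar>w b\<bar> < \<bar>w c\<bar> then 2 else 1))"
    unfolding g_def S_def using row_count[OF w kn(2) ab(1) _ c] row_count[OF w kn(2) _ ab(3) c] ab by simp
  have t: "rplus a b \<in> S \<longleftrightarrow> w b < 0 \<and> (w a < 0 \<or> \<bar>w b\<bar> < w a)"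
    unfolding S_def by (rule top_crit[OF w kn(2) ab])
  show ?thesis
  proof (cases "w a < 0")
    case True
    then have "w b < 0" using s3 by simp
    then show ?thesis unfolding g t using True by auto
  next
    case False
    then have pa: "0 < w a" using nz by simp
    show ?thesis
    proof (cases "w b < 0")
      case True
      then show ?thesis unfolding g t using pa inj nz by (auto simp: abs_if)
    next
      case False
      then have "0 < w b" using nz by simp
      then show ?thesis unfolding g t using pa by auto
    qed
  qed
qed

theorem lemma3p13:
  fixes k n :: nat
  assumes "1 \<le> k" and "k < n"
  shows "Y_OG k n \<subseteq> Theta k n"
proof
  fix S assume "S \<in> Y_OG k n"
  then obtain w where w: "w \<in> W_OG k n" and S: "S = Inv n w" unfolding Y_OG_def by auto
  note kn = assms
  have sub: "S \<subseteq> base_region k n \<union> top_region k" using inv_subset[OF w kn] S by simp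
  have L1: "lower_ideal n (base_region k n) (S \<inter> base_region k n)"
    unfolding lower_ideal_def
  proof (intro conjI ballI impI)
    show "S \<inter> base_region k n \<subseteq> base_region k n" by simp
  next
    fix \<beta> \<alpha> assume \<beta>: "\<beta> \<in> S \<inter> base_region k n" and \<alpha>: "\<alpha> \<in> base_region k n" and le: "root_le n \<alpha> \<beta>"
    obtain s a b where a: "\<alpha> = rt s a b" "1 \<le> a" "a \<le> k" "k < b" "b \<le> n" using base_rt[OF \<alpha>] by blast
    obtain t a' b' where b: "\<beta> = rt t a' b'" "1 \<le> a'" "a' \<le> k" "k < b'" "b' \<le> n" using base_rt \<beta> by blast
    have "\<alpha> \<in> Inv n w"
      unfolding a(1) by (rule base_step[OF w kn a(2-5) b(2-5)]) (use le a b \<beta> S in auto)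
    then show "\<alpha> \<in> S \<inter> base_region k n" using \<alpha> S by simp
  qed
  have L2: "lower_ideal n (top_region k) (S \<inter> top_region k)"
    unfolding lower_ideal_def
  proof (intro conjI ballI impI)
    show "S \<inter> top_region k \<subseteq> top_region k" by simp
  next
    fix \<beta> \<alpha> assume \<beta>: "\<beta> \<in> S \<inter> top_region k" and \<alpha>: "\<alpha> \<in> top_region k" and le: "root_le n \<alpha> \<beta>"
    obtain a b where a: "\<alpha> = rplus a b" "1 \<le> a" "a < b" "b \<le> k" using \<alpha> unfolding top_region_def by blast
    obtain a' b' where b: "\<beta> = rplus a' b'" "1 \<le> a'" "a' < b'" "b' \<le> k" using \<beta> unfolding top_region_def by blast
    have "\<alpha> \<in> Inv n w"
      unfolding a(1) by (rule top_step[OF w kn a(2-4) b(2-4)]) (use le a b \<beta> S in auto)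
    then show "\<alpha> \<in> S \<inter> top_region k" using \<alpha> S by simp
  qed
  have L3: "(card (S \<inter> (diamond k n (k + 1 - a) \<union> diamond k n (k + 1 - b))) > 2 * n - 2 * k
            \<longrightarrow> rplus a b \<in> S) \<and>
        (card (S \<inter> (diamond k n (k + 1 - a) \<union> diamond k n (k + 1 - b))) < 2 * n - 2 * k
            \<longrightarrow> rplus a b \<notin> S)" if ab: "1 \<le> a" "a < b" "b \<le> k" for a b
  proof -
    define g where "g \<equiv> \<lambda>c. (of_bool (rminus a c \<in> S) + of_bool (rplus a c \<in> S))
                   + (of_bool (rminus b c \<in> S) + of_bool (rplus b c \<in> S) :: nat)"
    have C: "card (S \<inter> (diamond k n (k + 1 - a) \<union> diamond k n (k + 1 - b))) = (\<Sum>c\<in>{k<..n}. g c)"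
      unfolding g_def S by (rule card_pair[OF w kn ab])
    have pw: "(rplus a b \<in> S \<longrightarrow> 2 \<le> g c) \<and> (rplus a b \<notin> S \<longrightarrow> g c \<le> 2)" if "c \<in> {k<..n}" for c
      unfolding g_def S using pointwise[OF w kn ab, of c] that by auto
    have two: "(\<Sum>c\<in>{k<..n}. (2::nat)) = 2 * n - 2 * k" by simp
    show ?thesis
    proof (cases "rplus a b \<in> S")
      case True
      then have "(\<Sum>c\<in>{k<..n}. (2::nat)) \<le> (\<Sum>c\<in>{k<..n}. g c)" using pw by (intro sum_mono) auto
      then show ?thesis using True C two by simp
    next
      case False
      then have "(\<Sum>c\<in>{k<..n}. g c) \<le> (\<Sum>c\<in>{k<..n}. (2::nat))" using pw by (intro sum_mono) auto
      then show ?thesis using False C two by simp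
    qed
  qed
  show "S \<in> Theta k n" unfolding Theta_def using sub L1 L2 L3 by blast
qed

end
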